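(* Let $E,m\ge1$, let $x,x'\in\mathbb{F}^E_m\cap[0,1]$ satisfy $0<x-x'<1$ (exact real subtraction), and let $\ell\ge1$ be an integer. Let $\beta=(n_1,n_2,n_{\mathrm{hi}},n_{\mathrm{lo}},b_1,b_2,g_{\mathrm{hi}},g_{\mathrm{lo}})=\textsc{Pre1}(x,x')$ and $b'=\textsc{ExtractBit}(\beta,\ell)$, with the procedures defined in the context. Then $0\le g_{\mathrm{hi}}<2^{n_{\mathrm{hi}}}$, $0\le g_{\mathrm{lo}}<2^{n_{\mathrm{lo}}}$, and $x-x'=(0.\,\underbrace{b_1\ldots b_1}_{n_1}\,[g_{\mathrm{hi}}]_{n_{\mathrm{hi}}}\,\underbrace{b_2\ldots b_2}_{n_2}\,[g_{\mathrm{lo}}]_{n_{\mathrm{lo}}})_2$, where $[g]_k$ denotes the $k$-digit binary representation of $g$ (with leading zeros); moreover $b'$ is the $\ell$-th digit after the binary point of the concise binary expansion of $x-x'$, and all intermediate values appearing in $\textsc{Pre1}$ and $\textsc{ExtractBit}$ are representable as $(1+E+m)$-bit signed integers.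
   Context: $\mathbb{F}^E_m$ is the IEEE-754 floating-point format with bit strings $s\,e_E\ldots e_1\,f_1\ldots f_m$, bias $b_E=2^{E-1}-1$, $e=(e_E\ldots e_1)_2$; finite nonnegative values are $(0.f_1\ldots f_m)_2\,2^{1-b_E}$ if $e=0$ and $(1.f_1\ldots f_m)_2\,2^{e-b_E}$ if $0<e<2^E-1$. A concise binary expansion does not end in infinitely many 1s. $\textsc{Pre1}(x,x')$: let $e,e'$ be the exponent fields of $x,x'$ and $f_i,f'_i$ their mantissa bits. Set $\hat e=e-(2^{E-1}-1)+\mathbf{1}[e=0]$, $\hat e'=e'-(2^{E-1}-1)+\mathbf{1}[e'=0]$, $f=(1f_1\ldots f_m)_2-\mathbf{1}[e=0]2^m$, $f'=(1f'_1\ldots f'_m)_2-\mathbf{1}[e'=0]2^m$, $d=\hat e-\hat e'$, $f'_{\mathrm{hi}}=\lfloor f'/2^{\min\{d,E+m\}}\rfloor$, $f'_{\mathrm{lo}}=f'\bmod 2^{\min\{d,m+1\}}$, $n_1=-\hat e-1+\mathbf{1}[x=1]$, $n_2=\max\{d-(m+1),0\}$, $n_{\mathrm{hi}}=m+1-\mathbf{1}[x=1]$, $n_{\mathrm{lo}}=\min\{d,m+1\}$, $b_1=0$, $b_2=\mathbf{1}[f'_{\mathrm{lo}}>0]$, $g_{\mathrm{hi}}=f-f'_{\mathrm{hi}}-b_2$, $g_{\mathrm{lo}}=b_2\,2^{n_{\mathrm{lo}}}-f'_{\mathrm{lo}}$; return $(n_1,n_2,n_{\mathrm{hi}},n_{\mathrm{lo}},b_1,b_2,g_{\mathrm{hi}},g_{\mathrm{lo}})$.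 $\textsc{ExtractBit}(\beta,\ell)$: if $\ell\le n_1$ return $b_1$; else if $\ell\le n_1+n_{\mathrm{hi}}$ return the $(\ell-n_1)$-th most significant digit of $[g_{\mathrm{hi}}]_{n_{\mathrm{hi}}}$; else if $\ell\le n_1+n_{\mathrm{hi}}+n_2$ return $b_2$; else if $\ell\le n_1+n_{\mathrm{hi}}+n_2+n_{\mathrm{lo}}$ return the $(\ell-n_1-n_{\mathrm{hi}}-n_2)$-th most significant digit of $[g_{\mathrm{lo}}]_{n_{\mathrm{lo}}}$; else return $0$. *)

theory Defs
  imports Complex_Main
begin

text \<open>A floating-point bit string s e_E..e_1 f_1..f_m is represented by the triple
  (s, e, f) of naturals: sign bit s, exponent field e = (e_E..e_1)_2 and
  mantissa field f = (f_1..f_m)_2.\<close>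

type_synonym fp = "nat \<times> nat \<times> nat"

definition bias :: "nat \<Rightarrow> int" where
  "bias E = 2 ^ (E - 1) - 1"

text \<open>Finite elements of F^E_m (exponent field not all ones).\<close>
definition is_float :: "nat \<Rightarrow> nat \<Rightarrow> fp \<Rightarrow> bool" where
  "is_float E m x = (case x of (s, e, f) \<Rightarrow> s \<le> 1 \<and> e < 2 ^ E - 1 \<and> f < 2 ^ m)"

definition fval :: "nat \<Rightarrow> nat \<Rightarrow> fp \<Rightarrow> real" where
  "fval E m x = (case x of (s, e, f) \<Rightarrow>
     (-1) ^ s * (if e = 0 then (real f / 2 ^ m) * 2 powi (1 - bias E)
                 else (1 + real f / 2 ^ m) * 2 powi (int e - bias E)))"

definition exp_hat :: "nat \<Rightarrow> fp \<Rightarrow> int" where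
  "exp_hat E x = (case x of (s, e, f) \<Rightarrow> int e - bias E + (if e = 0 then 1 else 0))"

text \<open>(1 f_1 .. f_m)_2 = 2^m + f\<close>
definition mant_raw :: "nat \<Rightarrow> fp \<Rightarrow> int" where
  "mant_raw m x = (case x of (s, e, f) \<Rightarrow> 2 ^ m + int f)"

definition mant :: "nat \<Rightarrow> fp \<Rightarrow> int" where
  "mant m x = (case x of (s, e, f) \<Rightarrow> mant_raw m x - (if e = 0 then 2 ^ m else 0))"

definition expfield :: "fp \<Rightarrow> int" where
  "expfield x = (case x of (s, e, f) \<Rightarrow> int e)"

type_synonym beta = "int \<times> int \<times> int \<times> int \<times> int \<times> int \<times> int \<times> int"

definition Pre1 :: "nat \<Rightarrow> nat \<Rightarrow> fp \<Rightarrow> fp \<Rightarrow> beta" where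
  "Pre1 E m x x' =
    (let eh = exp_hat E x; eh' = exp_hat E x';
         f = mant m x; f' = mant m x';
         d = eh - eh';
         fhi' = f' div 2 ^ nat (min d (int E + int m));
         flo' = f' mod 2 ^ nat (min d (int m + 1));
         one = (if fval E m x = 1 then 1 else 0 :: int);
         n1 = - eh - 1 + one;
         n2 = max (d - (int m + 1)) 0;
         nhi = int m + 1 - one;
         nlo = min d (int m + 1);
         b1 = 0;
         b2 = (if flo' > 0 then 1 else 0 :: int);
         ghi = f - fhi' - b2;
         glo = b2 * 2 ^ nat nlo - flo'
     in (n1, n2, nhi, nlo, b1, b2, ghi, glo))"

text \<open>Powers of two used only as shift/mask operands are not listed.\<close>
definition Pre1_trace :: "nat \<Rightarrow> nat \<Rightarrow> fp \<Rightarrow> fp \<Rightarrow> int list" where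
  "Pre1_trace E m x x' =
    (let eh = exp_hat E x; eh' = exp_hat E x';
         f = mant m x; f' = mant m x';
         d = eh - eh';
         fhi' = f' div 2 ^ nat (min d (int E + int m));
         flo' = f' mod 2 ^ nat (min d (int m + 1));
         one = (if fval E m x = 1 then 1 else 0 :: int);
         n1 = - eh - 1 + one;
         n2 = max (d - (int m + 1)) 0;
         nhi = int m + 1 - one;
         nlo = min d (int m + 1);
         b1 = 0;
         b2 = (if flo' > 0 then 1 else 0 :: int);
         ghi = f - fhi' - b2;
         glo = b2 * 2 ^ nat nlo - flo'
     in [expfield x, expfield x', bias E, eh, eh', mant_raw m x, mant_raw m x', f, f', d,
         min d (int E + int m), min d (int m + 1), fhi', flo', one,
         n1, n2, nhi, nlo, b1, b2, f - fhi', ghi, glo])"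

text \<open>The i-th most significant digit (1 \<le> i \<le> k) of the k-digit binary
  representation [g]_k of g.\<close>
definition kdigit :: "int \<Rightarrow> int \<Rightarrow> int \<Rightarrow> int" where
  "kdigit k g i = (g div 2 ^ nat (k - i)) mod 2"

definition ExtractBit :: "beta \<Rightarrow> int \<Rightarrow> int" where
  "ExtractBit \<beta> l = (case \<beta> of (n1, n2, nhi, nlo, b1, b2, ghi, glo) \<Rightarrow>
     if l \<le> n1 then b1
     else if l \<le> n1 + nhi then kdigit nhi ghi (l - n1)
     else if l \<le> n1 + nhi + n2 then b2
     else if l \<le> n1 + nhi + n2 + nlo then kdigit nlo glo (l - n1 - nhi - n2)
     else 0)"

definition ExtractBit_trace :: "beta \<Rightarrow> int \<Rightarrow> int list" where
  "ExtractBit_trace \<beta> l = (case \<beta> of (n1, n2, nhi, nlo, b1, b2, ghi, glo) \<Rightarrow>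
     [n1 + nhi, n1 + nhi + n2, n1 + nhi + n2 + nlo]
     @ (if l \<le> n1 then []
        else if l \<le> n1 + nhi then [l - n1]
        else if l \<le> n1 + nhi + n2 then []
        else if l \<le> n1 + nhi + n2 + nlo then [l - n1, l - n1 - nhi, l - n1 - nhi - n2]
        else [])
     @ [ExtractBit \<beta> l])"

text \<open>Value of (0. b1..b1 [ghi]_nhi b2..b2 [glo]_nlo)_2 with n1 copies of b1 and
  n2 copies of b2: each block is placed at its digit positions.\<close>
definition bin_val :: "beta \<Rightarrow> real" where
  "bin_val \<beta> = (case \<beta> of (n1, n2, nhi, nlo, b1, b2, ghi, glo) \<Rightarrow>
      (\<Sum>i\<in>{1..nat n1}. real_of_int b1 * 2 powi (- int i))
    + real_of_int ghi * 2 powi (- (n1 + nhi))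
    + (\<Sum>i\<in>{1..nat n2}. real_of_int b2 * 2 powi (- (n1 + nhi + int i)))
    + real_of_int glo * 2 powi (- (n1 + nhi + n2 + nlo)))"

definition concise_bin_exp :: "real \<Rightarrow> (nat \<Rightarrow> int) \<Rightarrow> bool" where
  "concise_bin_exp r d \<longleftrightarrow>
     (\<forall>i\<ge>1. d i \<in> {0, 1}) \<and>
     (\<lambda>i. real_of_int (d (Suc i)) / 2 ^ Suc i) sums r \<and>
     \<not> (\<exists>N. \<forall>i\<ge>N. d i = 1)"

definition representable_signed :: "nat \<Rightarrow> int \<Rightarrow> bool" where
  "representable_signed k v \<longleftrightarrow> - (2 ^ (k - 1)) \<le> v \<and> v < 2 ^ (k - 1)"

end

theory Submission
  imports Defs
begin


lemma bitD:
  fixes A B :: int and k j :: nat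
  assumes "0 \<le> B" "B < 2^k"
  shows "(A * 2^k + B) div 2^j mod 2 = (if k \<le> j then A div 2^(j-k) mod 2 else B div 2^j mod 2)"
proof (cases "k \<le> j")
  case True
  have e: "(2::int)^j = 2^k * 2^(j-k)" using True by (simp add: power_add[symmetric])
  have "(A * 2^k + B) div 2^j = (A * 2^k + B) div 2^k div 2^(j-k)"
    unfolding e by (simp add: zdiv_zmult2_eq)
  also have "(A * 2^k + B) div 2^k = A" using assms by (simp add: div_pos_pos_trivial)
  finally show ?thesis using True by simp
next
  case False
  have e: "(2::int)^k = 2^j * 2^(k-j)" using False by (simp add: power_add[symmetric])
  have "(A * 2^k + B) div 2^j = ((A * 2^(k-j)) * 2^j + B) div 2^j"
    unfolding e by (simp add: ac_simps)
  also have "\<dots> = A * 2^(k-j) + B div 2^j" by (rule div_mult_self3) simp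
  finally have "(A * 2^k + B) div 2^j = A * 2^(k-j) + B div 2^j" .
  moreover have "even ((2::int)^(k-j))" using False by simp
  ultimately show ?thesis using False by (auto simp: mod_add_left_eq[symmetric] elim!: evenE)
qed

lemma ones_bit:
  fixes n j :: nat assumes "j < n"
  shows "((2::int)^n - 1) div 2^j mod 2 = 1"
proof -
  have "(2::int)^n - 1 = (2^(n-j) - 1) * 2^j + (2^j - 1)"
    using assms by (simp add: algebra_simps power_add[symmetric])
  hence "((2::int)^n - 1) div 2^j = ((2^(n-j) - 1) * 2^j + (2^j - 1)) div 2^j" by (simp only:)
  also have "\<dots> = 2^(n-j) - 1 + (2^j - 1) div 2^j" by (rule div_mult_self3) simp
  also have "(2^j - 1) div (2::int)^j = 0" by (simp add: div_pos_pos_trivial)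
  finally have "((2::int)^n - 1) div 2^j = 2^(n-j) - 1" by simp
  moreover have "odd ((2::int)^(n-j) - 1)" using assms by simp
  ultimately show ?thesis by (metis odd_iff_mod_2_eq_one)
qed

lemma floor_scaled:
  fixes R :: int and Q k :: nat
  shows "\<lfloor>2^k * (of_int R / 2^Q :: real)\<rfloor> = (if k \<le> Q then R div 2^(Q-k) else R * 2^(k-Q))"
proof (cases "k \<le> Q")
  case True
  have "2^k * (of_int R / 2^Q :: real) = of_int R / of_int (2^(Q-k))"
    using True by (simp add: field_simps power_add[symmetric])
  then show ?thesis using True by (simp only: floor_divide_of_int_eq) simp
next
  case False
  have "2^k * (of_int R / 2^Q :: real) = of_int (R * 2^(k-Q))"
    using False by (simp add: field_simps power_add[symmetric])
  then show ?thesis using False by (simp only: floor_of_int) simp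
qed



lemma floor_double:
  fixes y :: real
  shows "\<lfloor>2 * y\<rfloor> = 2 * \<lfloor>y\<rfloor> + \<lfloor>2 * y\<rfloor> mod 2"
proof -
  have a: "2 * \<lfloor>y\<rfloor> \<le> \<lfloor>2 * y\<rfloor>" by (simp add: le_floor_iff)
  have "y < of_int \<lfloor>y\<rfloor> + 1" using floor_correct[of y] by simp
  hence "2 * y < of_int (2 * \<lfloor>y\<rfloor> + 2)" by linarith
  hence b: "\<lfloor>2 * y\<rfloor> < 2 * \<lfloor>y\<rfloor> + 2" by (simp only: floor_less_iff)
  from a b show ?thesis by presburger
qed

lemma concise_digit:
  assumes c: "concise_bin_exp r d" and k: "1 \<le> k"
  shows "d k = \<lfloor>2^k * r\<rfloor> mod 2"
proof -
  define t where "t i = real_of_int (d (Suc i)) / 2 ^ Suc i" for i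
  have dig: "\<And>i. i \<ge> 1 \<Longrightarrow> d i = 0 \<or> d i = 1" using c unfolding concise_bin_exp_def by auto
  have ts: "t sums r" using c unfolding concise_bin_exp_def t_def by auto
  obtain k0 where k0: "k = Suc k0" using k by (cases k) auto
  obtain j where j: "j \<ge> Suc k" "d j \<noteq> 1" using c unfolding concise_bin_exp_def by auto
  have j0: "d j = 0" using dig[of j] j by auto
  define T where "T = r - sum t {..<k}"
  have tT: "(\<lambda>i. t (i + k)) sums T" unfolding T_def by (rule sums_split_initial_segment[OF ts])
  define u where "u i = real_of_int (d (Suc (i + k))) / 2 ^ Suc i" for i
  have ueq: "u i = 2^k * t (i + k)" for i
    unfolding u_def t_def by (simp add: field_simps power_add)
  have us: "u sums (2^k * T)" unfolding ueq by (rule sums_mult[OF tT])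
  have u0: "0 \<le> u i" for i using dig[of "Suc (i+k)"] unfolding u_def by auto
  have Tnn: "0 \<le> 2^k * T" using us u0 by (metis sums_le sums_zero)
  define g where "g i = (1/2::real)^Suc i - u i" for i
  have gs: "g sums (1 - 2^k * T)" unfolding g_def by (rule sums_diff[OF power_half_series us])
  have g0: "0 \<le> g i" for i using dig[of "Suc (i+k)"] unfolding g_def u_def
    by (auto simp: power_divide)
  have gj: "0 < g (j - Suc k)" unfolding g_def u_def using j j0
    by (simp add: Suc_diff_Suc)
  have "0 < suminf g" by (rule suminf_pos2[OF sums_summable[OF gs] g0 gj])
  hence Tlt: "2^k * T < 1" using gs sums_unique by fastforce
  define S where "S = (\<Sum>i<k. d (Suc i) * 2 ^ (k - Suc i))"
  have "2^k * sum t {..<k} = (\<Sum>i<k. 2^k * t i)" by (simp add: sum_distrib_left)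
  also have "\<dots> = (\<Sum>i<k. real_of_int (d (Suc i) * 2 ^ (k - Suc i)))"
  proof (rule sum.cong[OF refl])
    fix i assume "i \<in> {..<k}"
    hence "k = (k - Suc i) + Suc i" by simp
    hence "(2::real)^k = 2^(k - Suc i) * 2^Suc i" by (metis power_add)
    thus "2^k * t i = real_of_int (d (Suc i) * 2 ^ (k - Suc i))" unfolding t_def by simp
  qed
  also have "\<dots> = of_int S" unfolding S_def by simp
  finally have "2^k * r = of_int S + 2^k * T" unfolding T_def by (simp add: algebra_simps)
  hence fl: "\<lfloor>2^k * r\<rfloor> = S" using Tnn Tlt by (simp add: floor_eq_iff)
  have "S = (\<Sum>i<k0. d (Suc i) * 2 ^ (k - Suc i)) + d k" unfolding S_def k0 by simp
  also have "(\<Sum>i<k0. d (Suc i) * 2 ^ (k - Suc i)) = 2 * (\<Sum>i<k0. d (Suc i) * 2 ^ (k0 - Suc i))"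
    unfolding sum_distrib_left
  proof (rule sum.cong[OF refl])
    fix i assume "i \<in> {..<k0}"
    hence "k - Suc i = Suc (k0 - Suc i)" unfolding k0 by simp
    thus "d (Suc i) * 2 ^ (k - Suc i) = 2 * (d (Suc i) * 2 ^ (k0 - Suc i))" by simp
  qed
  finally have "S mod 2 = d k mod 2" by simp
  moreover have "d k mod 2 = d k" using dig[OF k] by auto
  ultimately show ?thesis using fl by simp
qed

lemma concise_exists:
  fixes r :: real
  assumes r0: "0 \<le> r" and r1: "r < 1"
  shows "concise_bin_exp r (\<lambda>k. \<lfloor>2^k * r\<rfloor> mod 2)"
proof -
  define dd where "dd k = \<lfloor>2^k * r\<rfloor> mod 2" for k :: nat
  have rec: "\<lfloor>2^Suc n * r\<rfloor> = 2 * \<lfloor>2^n * r\<rfloor> + dd (Suc n)" for n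
    unfolding dd_def using floor_double[of "2^n * r"] by (simp add: mult.assoc)
  have ps: "(\<Sum>i<n. real_of_int (dd (Suc i)) / 2 ^ Suc i) = \<lfloor>2^n * r\<rfloor> / 2^n" for n
  proof (induction n)
    case 0
    then show ?case using r0 r1 by (simp add: floor_eq_iff)
  next
    case (Suc n)
    have "(\<Sum>i<Suc n. real_of_int (dd (Suc i)) / 2 ^ Suc i)
        = real_of_int (2 * \<lfloor>2^n * r\<rfloor> + dd (Suc n)) / 2^Suc n"
      using Suc by (simp add: field_simps)
    also have "\<dots> = \<lfloor>2^Suc n * r\<rfloor> / 2^Suc n" by (simp only: rec)
    finally show ?case .
  qed
  have lim: "(\<lambda>n. \<lfloor>2^n * r\<rfloor> / 2^n) \<longlonglongrightarrow> r"
  proof (rule real_tendsto_sandwich)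
    show "\<forall>\<^sub>F n in sequentially. r - (1/2)^n \<le> \<lfloor>2^n * r\<rfloor> / (2::real)^n"
    proof (intro always_eventually allI)
      fix n :: nat
      have "2^n * r - 1 \<le> \<lfloor>2^n * r\<rfloor>" by linarith
      hence "(2^n * r - 1) / 2^n \<le> \<lfloor>2^n * r\<rfloor> / (2::real)^n" by (rule divide_right_mono) simp
      moreover have "(2^n * r - 1) / 2^n = r - (1/2::real)^n" by (simp add: field_simps power_divide)
      ultimately show "r - (1/2)^n \<le> \<lfloor>2^n * r\<rfloor> / (2::real)^n" by simp
    qed
    show "\<forall>\<^sub>F n in sequentially. \<lfloor>2^n * r\<rfloor> / (2::real)^n \<le> r"
      by (intro always_eventually allI) (simp add: field_simps)
    have "(\<lambda>n. r - (1/2::real)^n) \<longlonglongrightarrow> r - 0"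
      by (intro tendsto_intros) simp
    thus "(\<lambda>n. r - (1/2::real)^n) \<longlonglongrightarrow> r" by simp
  qed simp
  have sm: "(\<lambda>i. real_of_int (dd (Suc i)) / 2 ^ Suc i) sums r"
    unfolding sums_def ps by (rule lim)
  have ne: "\<not> (\<exists>N. \<forall>i\<ge>N. dd i = 1)"
  proof
    assume "\<exists>N. \<forall>i\<ge>N. dd i = 1"
    then obtain N where N: "\<And>i. i \<ge> N \<Longrightarrow> dd i = 1" by auto
    define a where "a n = \<lfloor>2^n * r\<rfloor> + 1" for n
    have aj: "a (N + j) = 2^j * a N" for j
    proof (induction j)
      case (Suc j)
      have "a (N + Suc j) = 2 * a (N + j)" unfolding a_def using rec[of "N + j"] N[of "Suc (N+j)"] by simp
      then show ?case using Suc by simp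
    qed simp
    have c: "0 < a N - 2^N * r" unfolding a_def by linarith
    obtain j :: nat where j: "1 / (a N - 2^N * r) < real j" using reals_Archimedean2 by blast
    have "real j < 2^j" using less_exp[of j] by (metis of_nat_less_iff of_nat_numeral of_nat_power)
    hence j2: "real j * (a N - 2^N * r) < 2^j * (a N - 2^N * r)" using c by (rule mult_strict_right_mono)
    have "1 < real j * (a N - 2^N * r)" using j c by (simp add: field_simps)
    with j2 have jj: "1 < 2^j * (a N - 2^N * r)" by linarith
    have "of_int (a (N+j)) - 1 \<le> 2^(N+j) * r" unfolding a_def by linarith
    hence "2^j * a N - 1 \<le> 2^j * (2^N * r)" unfolding aj by (simp add: power_add ac_simps)
    with jj show False by (simp add: algebra_simps)
  qed
  have "\<forall>i\<ge>1. dd i \<in> {0, 1}" unfolding dd_def by auto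
  with sm ne show ?thesis unfolding concise_bin_exp_def dd_def by blast
qed



lemma float_facts:
  assumes fl: "is_float E m x" and nn: "0 \<le> fval E m x"
  shows "fval E m x = of_int (mant m x) / 2^m * 2 powi exp_hat E x"
    and "0 \<le> mant m x" and "mant m x < 2^(m+1)"
    and "1 - bias E \<le> exp_hat E x"
    and "expfield x = 0 \<or> 2^m \<le> mant m x"
    and "expfield x = 0 \<Longrightarrow> exp_hat E x = 1 - bias E"
    and "0 \<le> expfield x" and "expfield x < 2^E - 1"
    and "2^m \<le> mant_raw m x" and "mant_raw m x < 2^(m+1)"
    and "0 \<le> bias E"
proof -
  obtain s e fr where x: "x = (s, e, fr)" by (cases x) auto
  have s: "s \<le> 1" and e: "e < 2^E - 1" and fr: "fr < 2^m" using fl unfolding x is_float_def by auto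
  have b0: "0 \<le> bias E" unfolding bias_def by simp
  show "0 \<le> bias E" by (rule b0)
  define V where "V = of_int (mant m x) / 2^m * (2::real) powi exp_hat E x"
  have V: "fval E m x = (-1)^s * V"
  proof (cases "e = 0")
    case True
    then show ?thesis unfolding V_def x fval_def mant_def mant_raw_def exp_hat_def by simp
  next
    case False
    then show ?thesis unfolding V_def x fval_def mant_def mant_raw_def exp_hat_def
      by (simp add: field_simps)
  qed
  have mnn: "0 \<le> mant m x" unfolding x mant_def mant_raw_def by simp
  have V0: "0 \<le> V" unfolding V_def using mnn by simp
  show "fval E m x = of_int (mant m x) / 2^m * 2 powi exp_hat E x"
  proof (cases "s = 0")
    case True then show ?thesis using V V_def by simp
  next
    case False
    hence "s = 1" using s by simp
    hence "fval E m x = - V" using V by simp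
    hence "V = 0" using nn V0 by simp
    then show ?thesis using \<open>fval E m x = - V\<close> V_def by simp
  qed
  show "0 \<le> mant m x" by (rule mnn)
  have fr': "int fr < 2^m" using fr by (metis of_nat_less_iff of_nat_numeral of_nat_power)
  show "mant m x < 2^(m+1)" unfolding x mant_def mant_raw_def using fr' by (auto intro: less_le_trans[OF fr'])
  show "1 - bias E \<le> exp_hat E x" unfolding x exp_hat_def by auto
  show "expfield x = 0 \<or> 2^m \<le> mant m x" unfolding x expfield_def mant_def mant_raw_def by auto
  show "expfield x = 0 \<Longrightarrow> exp_hat E x = 1 - bias E" unfolding x expfield_def exp_hat_def by auto
  show "0 \<le> expfield x" unfolding x expfield_def by auto
  have "int e < int (2^E - 1)" using e by linarith
  thus "expfield x < 2^E - 1" unfolding x expfield_def by (simp add: of_nat_diff)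
  show "2^m \<le> mant_raw m x" unfolding x mant_raw_def by simp
  show "mant_raw m x < 2^(m+1)" unfolding x mant_raw_def using fr' by simp
qed

lemma exp_le_1:
  assumes fl: "is_float E m x" and nn: "0 \<le> fval E m x" and le1: "fval E m x \<le> 1"
  shows "exp_hat E x \<le> 1"
proof (cases "expfield x = 0")
  case True
  then show ?thesis using float_facts[OF fl nn] by simp
next
  case False
  hence "2^m \<le> mant m x" using float_facts[OF fl nn] by simp
  hence "(2::real)^m \<le> of_int (mant m x)" by (metis of_int_le_iff of_int_numeral of_int_power)
  hence "1 \<le> of_int (mant m x) / (2::real)^m" by simp
  hence "1 * 2 powi exp_hat E x \<le> of_int (mant m x) / (2::real)^m * 2 powi exp_hat E x"
    by (rule mult_right_mono) simp
  hence "(2::real) powi exp_hat E x \<le> fval E m x" using float_facts(1)[OF fl nn] by simp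
  hence "(2::real) powi exp_hat E x \<le> 1" using le1 by linarith
  show ?thesis
  proof (rule ccontr)
    assume "\<not> ?thesis"
    hence "(2::real) powi 1 < 2 powi exp_hat E x" by (intro power_int_strict_increasing) auto
    with \<open>(2::real) powi exp_hat E x \<le> 1\<close> show False by simp
  qed
qed



lemma extract_correct:
  fixes n1 n2 nhi nlo b2 ghi glo R l :: int and Q :: nat
  assumes n2: "0 \<le> n2" and nhi: "0 \<le> nhi" and nlo: "0 \<le> nlo" and b2: "b2 = 0 \<or> b2 = 1"
    and g1: "0 \<le> ghi" "ghi < 2^nat nhi" and g2: "0 \<le> glo" "glo < 2^nat nlo"
    and Q: "int Q = n1 + nhi + n2 + nlo" and l: "1 \<le> l"
    and R: "R = (ghi * 2^nat n2 + b2 * (2^nat n2 - 1)) * 2^nat nlo + glo"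
  shows "ExtractBit (n1, n2, nhi, nlo, 0, b2, ghi, glo) l = \<lfloor>2^nat l * (of_int R / 2^Q :: real)\<rfloor> mod 2"
proof -
  define L where "L = nat l"
  have Ll: "int L = l" unfolding L_def using l by simp
  define N2 where "N2 = nat n2"
  define NHI where "NHI = nat nhi"
  define NLO where "NLO = nat nlo"
  have N2: "int N2 = n2" and NHI: "int NHI = nhi" and NLO: "int NLO = nlo"
    using n2 nhi nlo unfolding N2_def NHI_def NLO_def by auto
  define A where "A = ghi * 2^N2 + b2 * (2^N2 - 1)"
  have R': "R = A * 2^NLO + glo" unfolding R A_def N2_def NLO_def by simp
  have EB: "ExtractBit (n1, n2, nhi, nlo, 0, b2, ghi, glo) l =
     (if l \<le> n1 then 0
     else if l \<le> n1 + nhi then (ghi div 2 ^ nat (nhi - (l - n1))) mod 2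
     else if l \<le> n1 + nhi + n2 then b2
     else if l \<le> n1 + nhi + n2 + nlo then (glo div 2 ^ nat (nlo - (l - n1 - nhi - n2))) mod 2
     else 0)" unfolding ExtractBit_def kdigit_def by simp
  show ?thesis
  proof (cases "l \<le> int Q")
    case False
    hence "\<not> L \<le> Q" using Ll by simp
    hence fl: "\<lfloor>2^nat l * (of_int R / 2^Q :: real)\<rfloor> = R * 2^(L - Q)"
      using floor_scaled[of L R Q] unfolding L_def by simp
    have "even ((2::int)^(L - Q))" using \<open>\<not> L \<le> Q\<close> by simp
    hence "R * 2^(L-Q) mod 2 = 0" by auto
    moreover have "ExtractBit (n1, n2, nhi, nlo, 0, b2, ghi, glo) l = 0"
      unfolding EB using False Q n2 nhi nlo by auto
    ultimately show ?thesis using fl by simp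
  next
    case True
    hence LQ: "L \<le> Q" using Ll by simp
    define t where "t = Q - L"
    have ti: "int t = int Q - l" unfolding t_def using LQ Ll by simp
    have fl: "\<lfloor>2^nat l * (of_int R / 2^Q :: real)\<rfloor> = R div 2^t"
      using floor_scaled[of L R Q] LQ unfolding L_def t_def by simp
    have bitR: "R div 2^t mod 2 = (if NLO \<le> t then A div 2^(t-NLO) mod 2 else glo div 2^t mod 2)"
      unfolding R' by (rule bitD) (use g2 NLO_def in auto)
    have B0: "0 \<le> b2 * (2^N2 - 1)" using b2 by auto
    have B1: "b2 * (2^N2 - 1) < 2^N2" using b2 by auto
    have bitA: "A div 2^j mod 2 = (if N2 \<le> j then ghi div 2^(j - N2) mod 2 else b2 * (2^N2 - 1) div 2^j mod 2)" for j
      unfolding A_def by (rule bitD[OF B0 B1])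
    show ?thesis
    proof (cases "NLO \<le> t")
      case False
      hence c: "n1 + nhi + n2 < l" using ti NLO Q by linarith
      have e: "nat (nlo - (l - n1 - nhi - n2)) = t" using ti Q by linarith
      have c2: "\<not> l \<le> n1" "\<not> l \<le> n1 + nhi" "\<not> l \<le> n1 + nhi + n2" "l \<le> n1 + nhi + n2 + nlo"
        using c n2 nhi True Q by linarith+
      show ?thesis unfolding EB fl bitR using False c2 e by simp
    next
      case T1: True
      show ?thesis
      proof (cases "N2 \<le> t - NLO")
        case False
        hence c: "n1 + nhi < l" "l \<le> n1 + nhi + n2" using ti NLO N2 Q T1 by linarith+
        have "b2 * (2^N2 - 1) div 2^(t - NLO) mod 2 = b2"
          using b2 False ones_bit[of "t - NLO" N2] by auto
        moreover have "\<not> l \<le> n1" using c nhi by linarith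
        ultimately show ?thesis unfolding EB fl bitR bitA using False c T1 by auto
      next
        case T2: True
        define u where "u = t - NLO - N2"
        have ui: "int u = n1 + nhi - l" unfolding u_def using ti NLO N2 Q T1 T2 by linarith
        show ?thesis
        proof (cases "l \<le> n1")
          case True
          hence "NHI \<le> u" using ui NHI by linarith
          hence "(2::int)^NHI \<le> 2^u" by simp
          hence "ghi div 2^u = 0" using g1 unfolding NHI_def by (intro div_pos_pos_trivial) linarith+
          then show ?thesis unfolding EB fl bitR bitA using True T1 T2 u_def by simp
        next
          case False
          have e: "nat (nhi - (l - n1)) = u" using ui by linarith
          have c: "l \<le> n1 + nhi" using ui by linarith
          show ?thesis unfolding EB fl bitR bitA using False T1 T2 c e u_def by simp
        qed
      qed
    qed
  qed
qed



lemma powi_neg_nat: "(2::real) powi (- int a) = 1 / 2^a"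
  by (simp add: power_int_minus_divide)

lemma geo_sum0: "(\<Sum>i\<in>{1..n}. 1 / (2::real) ^ (a + i)) = 1/2^a - 1/2^(a+n)"
proof (induction n)
  case 0 then show ?case by simp
next
  case (Suc n)
  have "(\<Sum>i\<in>{1..Suc n}. 1 / (2::real) ^ (a + i)) = (\<Sum>i\<in>{1..n}. 1 / (2::real) ^ (a + i)) + 1 / 2 ^ (a + Suc n)"
    by (rule sum.cl_ivl_Suc[THEN trans]) simp
  also have "\<dots> = 1/2^a - 1/2^(a+n) + 1 / 2 ^ (a + Suc n)" by (simp only: Suc.IH)
  also have "\<dots> = 1/2^a - 1/2^(a + Suc n)" by (simp add: field_simps)
  finally show ?case .
qed

lemma geo_sum: "(\<Sum>i\<in>{1..n}. (2::real) powi (- (int a + int i))) = 1/2^a - 1/2^(a+n)"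
proof -
  have "(\<Sum>i\<in>{1..n}. (2::real) powi (- (int a + int i))) = (\<Sum>i\<in>{1..n}. 1 / (2::real) ^ (a + i))"
    by (rule sum.cong[OF refl]) (metis of_nat_add powi_neg_nat)
  also have "\<dots> = 1/2^a - 1/2^(a+n)" by (rule geo_sum0)
  finally show ?thesis .
qed

lemma binval_correct:
  fixes n1 n2 nhi nlo b2 ghi glo :: int and P Q :: nat
  assumes n2: "0 \<le> n2" and nhi: "0 \<le> nhi" and nlo: "0 \<le> nlo"
    and P: "n1 + nhi = int P" and Q: "int Q = n1 + nhi + n2 + nlo"
  shows "bin_val (n1, n2, nhi, nlo, 0, b2, ghi, glo) =
     of_int ((ghi * 2^nat n2 + b2 * (2^nat n2 - 1)) * 2^nat nlo + glo) / 2^Q"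
proof -
  define N2 where "N2 = nat n2"
  define NLO where "NLO = nat nlo"
  have N2: "n2 = int N2" and NLO: "nlo = int NLO" using n2 nlo unfolding N2_def NLO_def by auto
  have QQ: "Q = P + N2 + NLO" using Q P N2 NLO by linarith
  have "bin_val (n1, n2, nhi, nlo, 0, b2, ghi, glo) =
     ghi * 2 powi (- int P) + (\<Sum>i\<in>{1..N2}. b2 * 2 powi (- (int P + int i))) + glo * 2 powi (- int Q)"
  proof -
    have Q': "int P + n2 + nlo = - (- int Q)" using Q P by simp
    show ?thesis unfolding bin_val_def prod.case P Q' N2_def by simp
  qed
  also have "(\<Sum>i\<in>{1..N2}. real_of_int b2 * 2 powi (- (int P + int i))) = b2 * (1/2^P - 1/2^(P+N2))"
    unfolding sum_distrib_left[symmetric] geo_sum ..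
  finally have "bin_val (n1, n2, nhi, nlo, 0, b2, ghi, glo) = ghi / 2^P + b2 * (1/2^P - 1/2^(P+N2)) + glo / 2^Q"
    by (simp add: powi_neg_nat)
  also have "\<dots> = of_int ((ghi * 2^N2 + b2 * (2^N2 - 1)) * 2^NLO + glo) / 2^Q"
    unfolding QQ by (simp add: field_simps power_add)
  finally show ?thesis unfolding N2_def NLO_def .
qed



lemma fval_lower:
  assumes fl: "is_float E m x" and nn: "0 \<le> fval E m x" and ne: "expfield x \<noteq> 0"
  shows "(2::real) powi exp_hat E x \<le> fval E m x"
proof -
  have "2^m \<le> mant m x" using float_facts[OF fl nn] ne by simp
  hence "(2::real)^m \<le> of_int (mant m x)" by (metis of_int_le_iff of_int_numeral of_int_power)
  hence "1 \<le> of_int (mant m x) / (2::real)^m" by simp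
  hence "1 * 2 powi exp_hat E x \<le> of_int (mant m x) / (2::real)^m * 2 powi exp_hat E x"
    by (rule mult_right_mono) simp
  thus ?thesis using float_facts(1)[OF fl nn] by simp
qed

lemma fval_upper:
  assumes fl: "is_float E m x" and nn: "0 \<le> fval E m x"
  shows "fval E m x < (2::real) powi (exp_hat E x + 1)"
proof -
  have "mant m x < 2^(m+1)" using float_facts[OF fl nn] by simp
  hence "of_int (mant m x) < (2::real)^(m+1)" by (metis of_int_less_iff of_int_numeral of_int_power)
  hence "of_int (mant m x) / (2::real)^m < 2" by (simp add: field_simps)
  hence "of_int (mant m x) / (2::real)^m * 2 powi exp_hat E x < 2 * 2 powi exp_hat E x"
    by (rule mult_strict_right_mono) simp
  thus ?thesis using float_facts(1)[OF fl nn] by (simp add: power_int_add_1')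
qed

lemma exp_mono:
  assumes fl: "is_float E m x" and nn: "0 \<le> fval E m x"
    and fl': "is_float E m x'" and nn': "0 \<le> fval E m x'"
    and lt: "fval E m x' < fval E m x"
  shows "exp_hat E x' \<le> exp_hat E x"
proof (cases "expfield x' = 0")
  case True
  then show ?thesis using float_facts[OF fl' nn'] float_facts[OF fl nn] by simp
next
  case False
  show ?thesis
  proof (rule ccontr)
    assume "\<not> ?thesis"
    hence "(2::real) powi (exp_hat E x + 1) \<le> 2 powi exp_hat E x'"
      by (intro power_int_increasing) auto
    with fval_lower[OF fl' nn' False] fval_upper[OF fl nn] lt show False by linarith
  qed
qed

lemma powi_diff_nat: "(2::real) powi (int a - int b) = 2^a / 2^b"
  by (simp add: power_int_diff)



theorem theorem5p16:
  fixes E m :: nat and x x' :: fp and l :: int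
  assumes "E \<ge> 1" and "m \<ge> 1"
    and "is_float E m x" and "is_float E m x'"
    and "0 \<le> fval E m x" and "fval E m x \<le> 1"
    and "0 \<le> fval E m x'" and "fval E m x' \<le> 1"
    and "0 < fval E m x - fval E m x'" and "fval E m x - fval E m x' < 1"
    and "l \<ge> 1"
  shows "case Pre1 E m x x' of (n1, n2, nhi, nlo, b1, b2, ghi, glo) \<Rightarrow>
           0 \<le> ghi \<and> ghi < 2 ^ nat nhi \<and> 0 \<le> glo \<and> glo < 2 ^ nat nlo \<and>
           fval E m x - fval E m x' = bin_val (Pre1 E m x x') \<and>
           (\<exists>d. concise_bin_exp (fval E m x - fval E m x') d) \<and>
           (\<forall>d. concise_bin_exp (fval E m x - fval E m x') d \<longrightarrow>
                  d (nat l) = ExtractBit (Pre1 E m x x') l) \<and>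
           (\<forall>v \<in> set (Pre1_trace E m x x'). representable_signed (1 + E + m) v) \<and>
           (\<forall>v \<in> set (ExtractBit_trace (Pre1 E m x x') l). representable_signed (1 + E + m) v)"
proof -
  note E1 = assms(1) and m1 = assms(2) and fl = assms(3) and fl' = assms(4)
  note nn = assms(5) and le1 = assms(6) and nn' = assms(7) and le1' = assms(8)
  note pos = assms(9) and lt1 = assms(10) and l1 = assms(11)
  note ff = float_facts[OF fl nn] and ff' = float_facts[OF fl' nn']
  define X where "X = fval E m x"
  define X' where "X' = fval E m x'"
  define eh where "eh = exp_hat E x"
  define eh' where "eh' = exp_hat E x'"
  define f where "f = mant m x"
  define f' where "f' = mant m x'"
  define dd where "dd = eh - eh'"
  define fhi' where "fhi' = f' div 2 ^ nat (min dd (int E + int m))"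
  define flo' where "flo' = f' mod 2 ^ nat (min dd (int m + 1))"
  define one where "one = (if fval E m x = 1 then 1 else 0 :: int)"
  define n1 where "n1 = - eh - 1 + one"
  define n2 where "n2 = max (dd - (int m + 1)) 0"
  define nhi where "nhi = int m + 1 - one"
  define nlo where "nlo = min dd (int m + 1)"
  define b2 where "b2 = (if flo' > 0 then 1 else 0 :: int)"
  define ghi where "ghi = f - fhi' - b2"
  define glo where "glo = b2 * 2 ^ nat nlo - flo'"
  have Pre: "Pre1 E m x x' = (n1, n2, nhi, nlo, 0, b2, ghi, glo)"
    unfolding Pre1_def Let_def n1_def n2_def nhi_def nlo_def b2_def ghi_def glo_def
      one_def flo'_def fhi'_def dd_def eh_def eh'_def f_def f'_def by simp
  have Tr: "Pre1_trace E m x x' = [expfield x, expfield x', bias E, eh, eh', mant_raw m x, mant_raw m x', f, f', dd,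
         min dd (int E + int m), min dd (int m + 1), fhi', flo', one,
         n1, n2, nhi, nlo, 0, b2, f - fhi', ghi, glo]"
    unfolding Pre1_trace_def Let_def n1_def n2_def nhi_def nlo_def b2_def ghi_def glo_def
      one_def flo'_def fhi'_def dd_def eh_def eh'_def f_def f'_def by simp
  have eh1: "eh \<le> 1" unfolding eh_def by (rule exp_le_1[OF fl nn le1])
  have eh'1: "eh' \<le> 1" unfolding eh'_def by (rule exp_le_1[OF fl' nn' le1'])
  have ehlo: "1 - bias E \<le> eh" "1 - bias E \<le> eh'" using ff ff' unfolding eh_def eh'_def by auto
  have dd0: "0 \<le> dd" unfolding dd_def eh_def eh'_def using exp_mono[OF fl nn fl' nn'] pos by simp
  define d where "d = nat dd"
  define Q where "Q = nat (int m - eh')"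
  define P where "P = nat (int m - eh)"
  have di: "int d = dd" unfolding d_def using dd0 by simp
  have Qi: "int Q = int m - eh'" unfolding Q_def using eh'1 m1 by simp
  have Pi: "int P = int m - eh" unfolding P_def using eh1 m1 by simp
  have QPd: "Q = P + d" using Qi Pi di dd_def by linarith
  have f0: "0 \<le> f" "f < 2^(m+1)" using ff unfolding f_def by auto
  have f'0: "0 \<le> f'" "f' < 2^(m+1)" using ff' unfolding f'_def by auto
  have Xf: "X = of_int f * 2^d / 2^Q"
  proof -
    have "eh = int (d + m) - int Q" using di Qi dd_def by simp
    hence "(2::real) powi eh = 2^(d+m) / 2^Q" using powi_diff_nat[of "d+m" Q] by (simp only:)
    thus ?thesis using ff(1) unfolding X_def f_def eh_def by (simp add: power_add)
  qed
  have X'f: "X' = of_int f' / 2^Q"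
  proof -
    have "eh' = int m - int Q" using Qi by simp
    hence "(2::real) powi eh' = 2^m / 2^Q" using powi_diff_nat[of m Q] by (simp only:)
    thus ?thesis using ff'(1) unfolding X'_def f'_def eh'_def by simp
  qed
  define R where "R = f * 2^d - f'"
  have rR: "X - X' = of_int R / 2^Q" unfolding Xf X'f R_def by (simp add: diff_divide_distrib)
  have R0: "0 < R"
  proof -
    have "0 < (of_int R :: real) / 2^Q" using rR pos X_def X'_def by simp
    thus ?thesis by (simp add: divide_pos_pos zero_less_divide_iff)
  qed
  have RQ: "R < 2^Q"
  proof -
    have "(of_int R :: real) / 2^Q < 1" using rR lt1 X_def X'_def by simp
    hence "(of_int R :: real) < 2^Q" by (simp add: divide_less_eq)
    thus ?thesis by (metis of_int_less_iff of_int_numeral of_int_power)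
  qed
  define N2 where "N2 = nat n2"
  define NLO where "NLO = nat nlo"
  define NHI where "NHI = nat nhi"
  have one01: "one = 0 \<or> one = 1" unfolding one_def by auto
  have n2i: "int N2 = n2" "0 \<le> n2" unfolding N2_def n2_def by auto
  have nloi: "int NLO = nlo" "0 \<le> nlo" unfolding NLO_def nlo_def using dd0 by auto
  have nhii: "int NHI = nhi" "0 \<le> nhi" unfolding NHI_def nhi_def using one01 by auto
  have dsplit: "d = N2 + NLO" using n2i nloi di unfolding n2_def nlo_def by linarith
  have Pn: "n1 + nhi = int P" unfolding n1_def nhi_def using Pi by simp
  have Qn: "int Q = n1 + nhi + n2 + nlo" using Pn QPd dsplit n2i nloi by simp
  have fdec: "f' = fhi' * 2^d + flo'" and flo0: "0 \<le> flo'" and flo1: "flo' < 2^NLO" and fhi0: "0 \<le> fhi'"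
  proof -
    have "0 \<le> fhi' \<and> 0 \<le> flo' \<and> f' = fhi' * 2^d + flo' \<and> flo' < 2^NLO"
    proof (cases "dd \<le> int m + 1")
      case True
      have a: "nat (min dd (int E + int m)) = d" "nat (min dd (int m + 1)) = d" "NLO = d"
        using True E1 di unfolding NLO_def nlo_def by auto
      show ?thesis unfolding fhi'_def flo'_def a using f'0 by (simp add: pos_imp_zdiv_nonneg_iff div_mult_mod_eq)
    next
      case False
      have a: "nat (min dd (int m + 1)) = m + 1" "NLO = m + 1" "m + 1 \<le> nat (min dd (int E + int m))"
        using False E1 unfolding NLO_def nlo_def by auto
      have "(2::int)^(m+1) \<le> 2^nat (min dd (int E + int m))" using a(3) by (rule power_increasing) simp
      hence "fhi' = 0" unfolding fhi'_def using f'0 by (intro div_pos_pos_trivial) auto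
      moreover have "flo' = f'" unfolding flo'_def a using f'0 by (simp add: mod_pos_pos_trivial)
      ultimately show ?thesis using f'0 a by simp
    qed
    thus "f' = fhi' * 2^d + flo'" "0 \<le> flo'" "flo' < 2^NLO" "0 \<le> fhi'" by auto
  qed
  have b2c: "(b2 = 0 \<and> flo' = 0) \<or> (b2 = 1 \<and> 0 < flo')" unfolding b2_def using flo0 by auto
  have glo0: "0 \<le> glo" and glo1: "glo < 2^NLO"
    using b2c flo0 flo1 unfolding glo_def NLO_def by auto
  define a2 where "a2 = (2::int)^N2"
  define a3 where "a3 = (2::int)^NLO"
  have a2p: "1 \<le> a2" and a3p: "1 \<le> a3" unfolding a2_def a3_def by auto
  have pd: "(2::int)^d = a2 * a3" unfolding a2_def a3_def dsplit by (simp add: power_add)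
  define W where "W = b2 * (a2 - 1) * a3 + glo"
  have Rdec: "R = (ghi * 2^nat n2 + b2 * (2^nat n2 - 1)) * 2^nat nlo + glo"
    unfolding R_def fdec ghi_def glo_def N2_def[symmetric] NLO_def[symmetric] pd a2_def[symmetric] a3_def[symmetric]
    by (simp add: algebra_simps)
  have RW: "R = ghi * (a2 * a3) + W"
    unfolding Rdec W_def N2_def[symmetric] NLO_def[symmetric] a2_def[symmetric] a3_def[symmetric]
    by (simp add: algebra_simps)
  have W0: "0 \<le> W" unfolding W_def using b2c glo0 a2p a3p by auto
  have W1: "W < a2 * a3"
  proof -
    have "W \<le> (a2 - 1) * a3 + glo" unfolding W_def using b2c a2p a3p by auto
    also have "\<dots> < a2 * a3" using glo1 unfolding a3_def[symmetric] by (simp add: algebra_simps)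
    finally show ?thesis .
  qed
  have ghi0: "0 \<le> ghi"
  proof -
    have "0 < (ghi + 1) * (a2 * a3)" using R0 RW W1 by (simp add: algebra_simps)
    moreover have "0 < a2 * a3" using a2p a3p by simp
    ultimately have "0 < ghi + 1" using zero_less_mult_pos2 by blast
    thus ?thesis by simp
  qed
  have ghiP: "ghi < 2^P"
  proof -
    have "ghi * (a2 * a3) < 2^P * (a2 * a3)" using RW W0 RQ unfolding QPd power_add pd by linarith
    thus ?thesis using a2p a3p by (simp add: mult_less_cancel_right)
  qed
  have ghi1: "ghi < 2^NHI"
  proof (cases "one = 1")
    case True
    hence X1: "X = 1" unfolding one_def X_def by (auto split: if_splits)
    hence "of_int f * 2^d / 2^Q = (1::real)" using Xf by (simp only:)
    hence "of_int f * 2^d = (2::real)^Q" by (simp add: divide_eq_eq)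
    hence "of_int (f * 2^d) = (of_int (2^Q) :: real)" by simp
    hence "f * 2^d = 2^Q" by (simp only: of_int_eq_iff)
    hence "f * 2^d = 2^P * 2^d" unfolding QPd by (simp add: power_add)
    hence "f = 2^P" by simp
    hence "(2::int)^P < 2^(m+1)" using f0 by simp
    hence "P < m + 1" using power_strict_increasing_iff[of "2::int" P "m+1"] by (simp only:)
    hence "(2::int)^P \<le> 2^m" by (intro power_increasing) auto
    moreover have "NHI = m" unfolding NHI_def nhi_def True by simp
    ultimately show ?thesis using ghiP by (metis less_le_trans)
  next
    case False
    hence "one = 0" using one01 by simp
    hence "NHI = m + 1" unfolding NHI_def nhi_def by (simp add: nat_add_distrib)
    moreover have "ghi \<le> f" unfolding ghi_def using fhi0 b2c by auto
    ultimately show ?thesis using f0 by simp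
  qed
  have b2'': "b2 = 0 \<or> b2 = 1" using b2c by auto
  have ghi1': "ghi < 2 ^ nat nhi" using ghi1 unfolding NHI_def .
  have glo1': "glo < 2 ^ nat nlo" using glo1 unfolding NLO_def .
  have bv: "X - X' = bin_val (Pre1 E m x x')"
    unfolding Pre using rR Rdec binval_correct[OF n2i(2) nhii(2) nloi(2) Pn Qn] by simp
  have EBc: "ExtractBit (Pre1 E m x x') l = \<lfloor>2^nat l * (of_int R / 2^Q :: real)\<rfloor> mod 2"
    unfolding Pre by (rule extract_correct[OF n2i(2) nhii(2) nloi(2) b2'' ghi0 ghi1' glo0 glo1' Qn l1 Rdec])
  have r0: "0 \<le> X - X'" and r1: "X - X' < 1" using pos lt1 X_def X'_def by auto
  have ex: "\<exists>d. concise_bin_exp (X - X') d" using concise_exists[OF r0 r1] by blast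
  have un: "\<forall>d. concise_bin_exp (X - X') d \<longrightarrow> d (nat l) = ExtractBit (Pre1 E m x x') l"
  proof (intro allI impI)
    fix d assume "concise_bin_exp (X - X') d"
    hence "d (nat l) = \<lfloor>2^nat l * (X - X')\<rfloor> mod 2" by (rule concise_digit) (use l1 in simp)
    thus "d (nat l) = ExtractBit (Pre1 E m x x') l" unfolding EBc rR .
  qed
  define B where "B = (2::int)^(E-1)"
  define M where "M = (2::int)^m"
  define K where "K = 2 * B * M"
  have B1: "1 \<le> B" unfolding B_def by simp
  have Mm: "int m + 1 \<le> M"
  proof -
    have "m < 2^m" by (rule less_exp)
    hence "int m < 2^m" by (metis of_nat_less_iff of_nat_numeral of_nat_power)
    thus ?thesis unfolding M_def by linarith
  qed
  have biasB: "bias E = B - 1" unfolding bias_def B_def by simp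
  have E2: "(2::int)^E = 2 * B" unfolding B_def using E1
    by (metis One_nat_def Suc_pred' less_eq_Suc_le power_Suc zero_less_one)
  have m2: "(2::int)^(m+1) = 2 * M" unfolding M_def by simp
  have Kdef: "(2::int)^(E+m) = K" unfolding K_def E2[symmetric] M_def by (simp add: power_add)
  have BM1: "M \<le> B * M" using B1 Mm by simp
  have BM2: "2 * B \<le> B * M" using B1 Mm m1 by (simp add: mult_left_mono[of 2 M B, simplified mult.commute])
  have K1: "2 * M \<le> K" "4 * B \<le> K" "M + 2 * B \<le> K" using BM1 BM2 unfolding K_def by linarith+
  have rep: "representable_signed (1 + E + m) v" if "- K \<le> v" "v < K" for v
    using that unfolding representable_signed_def Kdef[symmetric] by simp
  have tr1: "\<forall>v \<in> set (Pre1_trace E m x x'). representable_signed (1 + E + m) v"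
  proof -
    have e1: "0 \<le> expfield x" "expfield x < 2 * B - 1" using ff(7,8) E2 by auto
    have e2: "0 \<le> expfield x'" "expfield x' < 2 * B - 1" using ff'(7,8) E2 by auto
    have mr: "M \<le> mant_raw m x" "mant_raw m x < 2 * M" "M \<le> mant_raw m x'" "mant_raw m x' < 2 * M"
      using ff(9,10) ff'(9,10) m2 M_def by auto
    have f2: "f < 2 * M" "f' < 2 * M" using f0 f'0 m2 by auto
    have ehb: "2 - B \<le> eh" "2 - B \<le> eh'" using ehlo biasB by auto
    have ddb: "dd \<le> B - 1" using dd_def ehb eh1 eh'1 by linarith
    have mins: "0 \<le> min dd (int E + int m)" "min dd (int E + int m) \<le> dd"
      "0 \<le> min dd (int m + 1)" "min dd (int m + 1) \<le> dd" using dd0 by auto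
    have fhb: "fhi' \<le> f'" unfolding fhi'_def using f'0 zdiv_mono2[of f' 1 "2 ^ nat (min dd (int E + int m))"] by simp
    have "0 \<le> fhi' * 2^d" using fhi0 by simp
    hence flb: "flo' \<le> f'" using fdec by linarith
    have nb: "n2 \<le> dd" "nlo \<le> int m + 1" unfolding n2_def nlo_def using dd0 by auto
    have ghf: "ghi \<le> f" unfolding ghi_def using fhi0 b2c by auto
    have "(2::int)^NLO \<le> 2^(m+1)" using nb nloi by (intro power_increasing) auto
    hence glb: "glo < 2 * M" using glo1 m2 by simp
    have fmf: "0 \<le> f - fhi'" using ghi0 b2c unfolding ghi_def by auto
    have "\<forall>v \<in> set (Pre1_trace E m x x'). - K \<le> v \<and> v < K" unfolding Tr
      using e1 e2 mr f0 f'0 f2 ehb eh1 eh'1 ddb dd0 mins fhb fhi0 flb flo0 one01 nb n2i nloi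
        ghf ghi0 glb glo0 fmf K1 Mm B1 b2'' biasB
      unfolding n1_def nhi_def by auto
    thus ?thesis using rep by blast
  qed
  have tr2: "\<forall>v \<in> set (ExtractBit_trace (Pre1 E m x x') l). representable_signed (1 + E + m) v"
  proof -
    have EBv: "0 \<le> ExtractBit (n1, n2, nhi, nlo, 0, b2, ghi, glo) l"
      "ExtractBit (n1, n2, nhi, nlo, 0, b2, ghi, glo) l < 2" using EBc unfolding Pre by auto
    have ehb: "2 - B \<le> eh'" using ehlo biasB by auto
    have Qb: "int Q \<le> int m + B" using Qi ehb by linarith
    have nb: "nhi \<le> int m + 1" "n2 + nlo = dd" "dd \<le> B - 1" unfolding nhi_def using one01 n2i nloi dsplit di
      apply auto[2] using dd_def ehb eh1 ehlo biasB by linarith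
    have "\<forall>v \<in> set (ExtractBit_trace (Pre1 E m x x') l). - K \<le> v \<and> v < K" unfolding Pre ExtractBit_trace_def
      using EBv Qn Pn Qb nb n2i nloi nhii K1 Mm B1 by (auto split: if_splits)
    thus ?thesis using rep by blast
  qed
  show ?thesis unfolding Pre prod.case
    using ghi0 ghi1' glo0 glo1' bv ex un tr1 tr2 unfolding X_def X'_def Pre by blast
qed

end
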